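(* Let $t$ be a regular term and $r$ an arbitrary term in the language of strong quasi-Wajsberg* algebras. Then the equation $(r\to r)\to t\approx t$ is valid in all strong quasi-Wajsberg* algebras.
   Context: A quasi-Wajsberg* algebra is an algebra $\langle W;\to,\neg,{}^+,{}^-,1\rangle$ of type $\langle 2,1,1,1,0\rangle$ (${}^+,{}^-$ bind more tightly than $\neg$, which binds more tightly than $\to$) such that for all $x,y,z$: (1) $x\to y=\neg y\to\neg x$; (2) $(x\to 1)\to((y\to 1)\to z)=(y\to 1)\to((x\to 1)\to z)$; (3) $(1\to x)\to 1=1$; (4) $(z\to z)\to(x\to y)=x\to y$; (5) $(1\to 1)\to x^{+}=((1\to 1)\to x)^{+}=(x\to 1)\to 1$ and $(1\to 1)\to x^{-}=((1\to 1)\to x)^{-}=(x\to\neg 1)\to\neg 1$; (6) $x\to y=(y^{+}\to x^{-})\to(x^{+}\to y^{-})$; (7) $\neg(x\to y)=y\to x$; (8) $\neg\neg x=x$; (9) $(x\to(\neg x\to y))^{+}=x^{+}\to(\neg x^{+}\to y^{+})$; (10) $x\vee y=y\vee x$; (11) $x\vee(y\vee z)=(x\vee y)\vee z$; (12) $x\to(y\vee z)=(x\to y)\vee(x\to z)$; where $x\vee y:=((x^{+}\to y^{+})^{+}\to(\neg x)^{-})\to((y^{-}\to x^{-})^{-}\to x^{-})$. A strong quasi-Wajsberg* algebra is a quasi-Wajsberg* algebra satisfying $x^+=(1\to 1)\to x^+$ and $x^-=(1\to 1)\to x^-$. Terms in the language of strong quasi-Wajsberg* algebras are built from variables and the constant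 $1$ using $\to,\neg,{}^+,{}^-$. A term is regular if it contains an occurrence of $\to$ or of the constant $1$. *)

theory Defs
  imports Main
begin

text \<open>An algebra (W; imp, neg, pl, mi, one) of type (2,1,1,1,0), with carrier the whole
  type 'a.  imp x y is x \<rightarrow> y, neg x is \<not>x, pl x is x^+, mi x is x^-.\<close>

definition qw_join :: "('a \<Rightarrow> 'a \<Rightarrow> 'a) \<Rightarrow> ('a \<Rightarrow> 'a) \<Rightarrow> ('a \<Rightarrow> 'a) \<Rightarrow> ('a \<Rightarrow> 'a) \<Rightarrow> 'a \<Rightarrow> 'a \<Rightarrow> 'a"
  where "qw_join imp neg pl mi x y =
    imp (imp (pl (imp (pl x) (pl y))) (mi (neg x)))
        (imp (mi (imp (mi y) (mi x))) (mi x))"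

definition quasi_wajsberg_star ::
  "('a \<Rightarrow> 'a \<Rightarrow> 'a) \<Rightarrow> ('a \<Rightarrow> 'a) \<Rightarrow> ('a \<Rightarrow> 'a) \<Rightarrow> ('a \<Rightarrow> 'a) \<Rightarrow> 'a \<Rightarrow> bool"
  where "quasi_wajsberg_star imp neg pl mi one \<longleftrightarrow>
    (\<forall>x y. imp x y = imp (neg y) (neg x)) \<and>
    (\<forall>x y z. imp (imp x one) (imp (imp y one) z) = imp (imp y one) (imp (imp x one) z)) \<and>
    (\<forall>x. imp (imp one x) one = one) \<and>
    (\<forall>x y z. imp (imp z z) (imp x y) = imp x y) \<and>
    (\<forall>x. imp (imp one one) (pl x) = pl (imp (imp one one) x) \<and>
         pl (imp (imp one one) x) = imp (imp x one) one) \<and>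
    (\<forall>x. imp (imp one one) (mi x) = mi (imp (imp one one) x) \<and>
         mi (imp (imp one one) x) = imp (imp x (neg one)) (neg one)) \<and>
    (\<forall>x y. imp x y = imp (imp (pl y) (mi x)) (imp (pl x) (mi y))) \<and>
    (\<forall>x y. neg (imp x y) = imp y x) \<and>
    (\<forall>x. neg (neg x) = x) \<and>
    (\<forall>x y. pl (imp x (imp (neg x) y)) = imp (pl x) (imp (neg (pl x)) (pl y))) \<and>
    (\<forall>x y. qw_join imp neg pl mi x y = qw_join imp neg pl mi y x) \<and>
    (\<forall>x y z. qw_join imp neg pl mi x (qw_join imp neg pl mi y z)
             = qw_join imp neg pl mi (qw_join imp neg pl mi x y) z) \<and>
    (\<forall>x y z. imp x (qw_join imp neg pl mi y z)
             = qw_join imp neg pl mi (imp x y) (imp x z))"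

definition strong_quasi_wajsberg_star ::
  "('a \<Rightarrow> 'a \<Rightarrow> 'a) \<Rightarrow> ('a \<Rightarrow> 'a) \<Rightarrow> ('a \<Rightarrow> 'a) \<Rightarrow> ('a \<Rightarrow> 'a) \<Rightarrow> 'a \<Rightarrow> bool"
  where "strong_quasi_wajsberg_star imp neg pl mi one \<longleftrightarrow>
    quasi_wajsberg_star imp neg pl mi one \<and>
    (\<forall>x. pl x = imp (imp one one) (pl x)) \<and>
    (\<forall>x. mi x = imp (imp one one) (mi x))"

datatype qterm = QVar nat | QOne | QImp qterm qterm | QNeg qterm | QPlus qterm | QMinus qterm

primrec qeval :: "('a \<Rightarrow> 'a \<Rightarrow> 'a) \<Rightarrow> ('a \<Rightarrow> 'a) \<Rightarrow> ('a \<Rightarrow> 'a) \<Rightarrow> ('a \<Rightarrow> 'a) \<Rightarrow> 'a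
                  \<Rightarrow> (nat \<Rightarrow> 'a) \<Rightarrow> qterm \<Rightarrow> 'a" where
  "qeval imp neg pl mi one v (QVar n) = v n"
| "qeval imp neg pl mi one v QOne = one"
| "qeval imp neg pl mi one v (QImp s t) = imp (qeval imp neg pl mi one v s) (qeval imp neg pl mi one v t)"
| "qeval imp neg pl mi one v (QNeg s) = neg (qeval imp neg pl mi one v s)"
| "qeval imp neg pl mi one v (QPlus s) = pl (qeval imp neg pl mi one v s)"
| "qeval imp neg pl mi one v (QMinus s) = mi (qeval imp neg pl mi one v s)"

primrec regular :: "qterm \<Rightarrow> bool" where
  "regular (QVar n) = False"
| "regular QOne = True"
| "regular (QImp s t) = True"
| "regular (QNeg s) = regular s"
| "regular (QPlus s) = regular s"
| "regular (QMinus s) = regular s"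

end

theory Submission
  imports Defs
begin

lemma axs:
  assumes S: "strong_quasi_wajsberg_star imp neg pl mi one"
  shows "\<forall>x y. imp x y = imp (neg y) (neg x)"
    and "\<forall>x. imp (imp one x) one = one"
    and "\<forall>x y z. imp (imp z z) (imp x y) = imp x y"
    and "\<forall>x y. neg (imp x y) = imp y x"
    and "\<forall>x. neg (neg x) = x"
    and "\<forall>x. pl x = imp (imp one one) (pl x)"
    and "\<forall>x. mi x = imp (imp one one) (mi x)"
  using S unfolding strong_quasi_wajsberg_star_def quasi_wajsberg_star_def
  by (auto simp only: conj_assoc)

lemma aux:
  assumes S: "strong_quasi_wajsberg_star imp neg pl mi one"
    and "regular t"
  shows "imp (imp a a) (qeval imp neg pl mi one v t) = qeval imp neg pl mi one v t"
  using assms(2)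
proof (induction t arbitrary: a)
  case (QVar n) then show ?case by simp
next
  case QOne
  note a3 = axs(2)[OF S, rule_format] and a4 = axs(3)[OF S, rule_format]
  have "imp (imp a a) one = imp (imp a a) (imp (imp one one) one)" using a3 by simp
  also have "\<dots> = one" using a3 a4 by metis
  finally show ?case by simp
next
  case (QImp s u)
  then show ?case using axs(3)[OF S, rule_format] by simp
next
  case (QNeg s)
  note a1 = axs(1)[OF S, rule_format] and a7 = axs(4)[OF S, rule_format]
    and a8 = axs(5)[OF S, rule_format]
  let ?s = "qeval imp neg pl mi one v s"
  have ih: "imp (imp a a) ?s = ?s" using QNeg by simp
  have "imp (imp a a) (neg ?s) = imp (neg (neg ?s)) (neg (imp a a))" by (rule a1)
  also have "\<dots> = imp ?s (imp a a)" using a7 a8 by simp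
  also have "\<dots> = neg (imp (imp a a) ?s)" using a7 by simp
  also have "\<dots> = neg ?s" using ih by simp
  finally show ?case by simp
next
  case (QPlus s)
  note p = axs(6)[OF S, rule_format] and a4 = axs(3)[OF S, rule_format]
  show ?case by (simp, metis p a4)
next
  case (QMinus s)
  note p = axs(7)[OF S, rule_format] and a4 = axs(3)[OF S, rule_format]
  show ?case by (simp, metis p a4)
qed

theorem proposition3p6:
  fixes r t :: qterm
  assumes "regular t"
  shows "\<forall>imp neg pl mi one. strong_quasi_wajsberg_star imp neg pl mi (one::'a) \<longrightarrow>
           (\<forall>v. qeval imp neg pl mi one v (QImp (QImp r r) t) = qeval imp neg pl mi one v t)"
  by (intro allI impI) (simp add: aux[OF _ assms])

end
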